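(* Let $n\ge4$, let $C=\mathrm{circ}(1,0,\ldots,0,-1)$ of order $n-1$, and let $X=(CC^T+I_{n-1})^{-1}(J_{n-1}-nI_{n-1})$. Then $X=\mathrm{circ}(b_0,b_1,\ldots,b_{n-2})$ where, for $j=0,1,\ldots,n-2$, \[b_j=1+\frac{n2^{n-1-j}}{\sqrt{5}}\left[\frac{(3+\sqrt{5})^j}{2^{n-1}-(3+\sqrt{5})^{n-1}}-\frac{(3-\sqrt{5})^j}{2^{n-1}-(3-\sqrt{5})^{n-1}}\right].\]
   Context: For $c_0,\dots,c_{k-1}$, $\mathrm{circ}(c_0,\ldots,c_{k-1})$ denotes the $k\times k$ circulant matrix whose $(i,j)$-entry is $c_{(j-i)\bmod k}$. $J_{n-1}$ is the $(n-1)\times(n-1)$ all-ones matrix and $I_{n-1}$ the identity. Note $CC^T+I_{n-1}=\mathrm{circ}(3,-1,0,\ldots,0,-1)$, which is invertible. ($X$ is a block of the Moore–Penrose inverse of the oriented incidence matrix of the wheel graph $W_n$.) *)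

theory Defs
  imports "Jordan_Normal_Form.Matrix" Complex_Main
begin

definition circ :: "(nat \<Rightarrow> real) \<Rightarrow> nat \<Rightarrow> real mat" where
  "circ c k = mat k k (\<lambda>(i,j). c ((j + k - i) mod k))"

definition J_mat :: "nat \<Rightarrow> real mat" where
  "J_mat k = mat k k (\<lambda>_. 1)"

definition mat_inv :: "real mat \<Rightarrow> real mat" where
  "mat_inv A = (THE B. B \<in> carrier_mat (dim_row A) (dim_row A) \<and>
      A * B = 1\<^sub>m (dim_row A) \<and> B * A = 1\<^sub>m (dim_row A))"

end

theory Submission imports Defs "Jordan_Normal_Form.Determinant" begin

lemma mod_lt2: "(x::nat) < 2*m \<Longrightarrow> x mod m = (if x < m then x else x - m)"
  by (simp add: le_mod_geq)

definition F :: "real \<Rightarrow> nat \<Rightarrow> nat \<Rightarrow> real" where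
  "F x m k = x^k / (1 - x^m)"

lemma recF:
  assumes x: "x*x = 3*x - 1" and xm: "x^m \<noteq> 1" and m: "m \<ge> 3" and k: "k < m"
  shows "3 * F x m k - F x m ((k+m-1) mod m) - F x m ((k+1) mod m)
     = (if k = 0 then 3 - x else if k = m - 1 then -1 else 0)"
proof -
  have d: "1 - x^m \<noteq> 0" using xm by simp
  consider "k = 0" | "k = m - 1" | "0 < k" "k < m - 1" using k by linarith
  then show ?thesis
  proof cases
    case 1
    obtain q where q: "m = Suc q" using m by (cases m) auto
    have e1: "(k+m-1) mod m = q" using 1 q by simp
    have e2: "(k+1) mod m = 1" using 1 q m by simp
    have r: "(3 - x^q - x) - (3 - x) * (1 - x^m) = -(x^q * (x*x - (3*x - 1)))"
      by (simp add: q algebra_simps)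
    have "3 - x^q - x = (3 - x) * (1 - x^m)" using r x by simp
    moreover have "3 * F x m k - F x m q - F x m 1 = (3 - x^q - x) / (1 - x^m)"
      using 1 by (simp add: F_def diff_divide_distrib)
    ultimately show ?thesis using 1 d unfolding e1 e2 by simp
  next
    case 2
    obtain q where q: "m = Suc (Suc q)" using m by (metis add_2_eq_Suc le_Suc_ex numeral_3_eq_3 le_add2 le_trans add.commute Suc_le_D)
    have e1: "(k+m-1) mod m = q" using 2 q by (simp add: mod_lt2)
    have e2: "(k+1) mod m = 0" using 2 q by simp
    have r: "(3*x^(Suc q) - x^q - 1) - (-(1 - x^m)) = -(x^q * (x*x - (3*x - 1)))"
      by (simp add: q algebra_simps)
    have "3*x^(Suc q) - x^q - 1 = -(1 - x^m)" using r x by simp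
    moreover have "3 * F x m k - F x m q - F x m 0 = (3*x^(Suc q) - x^q - 1) / (1 - x^m)"
      using 2 q by (simp add: F_def diff_divide_distrib)
    moreover have "(x^m - 1) / (1 - x^m) = -1" using d by (simp add: field_simps)
    ultimately show ?thesis using 2 q m unfolding e1 e2 by simp
  next
    case 3
    obtain q where q: "k = Suc q" using 3 by (cases k) auto
    have e1: "(k+m-1) mod m = q" using 3 q by (simp add: mod_lt2)
    have e2: "(k+1) mod m = Suc k" using 3 by simp
    have r: "3*x^k - x^q - x^(Suc k) = -(x^q * (x*x - (3*x - 1)))"
      by (simp add: q algebra_simps)
    have "3*x^k - x^q - x^(Suc k) = 0" using r x by simp
    moreover have "3 * F x m k - F x m q - F x m (Suc k) = (3*x^k - x^q - x^(Suc k)) / (1 - x^m)"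
      by (simp add: F_def diff_divide_distrib)
    ultimately show ?thesis using 3 d q unfolding e1 e2 by simp
  qed
qed

definition dl :: "nat \<Rightarrow> nat \<Rightarrow> real" where
  "dl a k = (if k = a then 1 else 0)"

lemma dl_sym: "dl a k = dl k a" by (auto simp: dl_def)

lemma sum_dl: "a < m \<Longrightarrow> (\<Sum>k<m. dl a k * f k) = f a"
  by (simp add: dl_def if_distrib[of "\<lambda>x. x * _"] cong: if_cong)

lemma sum_dl1: "a < m \<Longrightarrow> (\<Sum>k<m. dl a k) = 1"
  using sum_dl[of a m "\<lambda>_. 1"] by simp

lemma pred_inj: "(i::nat) < m \<Longrightarrow> l < m \<Longrightarrow> ((i+m-1) mod m = (l+m-1) mod m) = (i = l)"
  by (cases "i = 0"; cases "l = 0"; auto simp: mod_lt2)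

lemma pred_succ: "(i::nat) < m \<Longrightarrow> l < m \<Longrightarrow> (i = (l+m-1) mod m) = (l = (i+1) mod m)"
  by (cases "l = 0"; cases "i + 1 = m"; auto simp: mod_lt2)

lemma C_entry:
  assumes "m \<ge> 3" "i < m" "k < m"
  shows "circ (\<lambda>j. if j = 0 then 1 else if j = m - 1 then -1 else 0) m $$ (i,k)
       = dl i k - dl ((i+m-1) mod m) k"
  using assms by (cases "i = 0"; cases "k = i"; cases "k + 1 = i"; auto simp: circ_def dl_def mod_lt2)

lemma mult_transpose_entry:
  assumes "A \<in> carrier_mat m m" "B \<in> carrier_mat m m" "i < m" "l < m"
  shows "(A * B\<^sup>T) $$ (i,l) = (\<Sum>k<m. A $$ (i,k) * B $$ (l,k))"
  using assms by (simp add: scalar_prod_def lessThan_atLeast0)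

lemma mult_entry:
  assumes "A \<in> carrier_mat m m" "B \<in> carrier_mat m m" "i < m" "l < m"
  shows "(A * B) $$ (i,l) = (\<Sum>k<m. A $$ (i,k) * B $$ (k,l))"
  using assms by (simp add: scalar_prod_def lessThan_atLeast0)

lemma sum4:
  assumes "a < m" "b < m" "c < m" "d < m"
  shows "(\<Sum>k<m. (dl a k - dl b k) * (dl c k - dl d k)) = dl a c - dl a d - dl b c + dl b d"
proof -
  have "(\<Sum>k<m. (dl a k - dl b k) * (dl c k - dl d k)) =
     (\<Sum>k<m. dl a k * dl c k) - (\<Sum>k<m. dl a k * dl d k) - (\<Sum>k<m. dl b k * dl c k) + (\<Sum>k<m. dl b k * dl d k)"
    by (simp add: algebra_simps sum.distrib sum_subtractf)
  also have "\<dots> = dl c a - dl d a - dl c b + dl d b"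
    by (simp add: sum_dl[OF assms(1)] sum_dl[OF assms(2)])
  also have "\<dots> = dl a c - dl a d - dl b c + dl b d"
    by (simp add: dl_def)
  finally show ?thesis .
qed

lemma M_entry:
  assumes m: "m \<ge> 3" and i: "i < m" and l: "l < m"
  defines "C \<equiv> circ (\<lambda>j. if j = 0 then 1 else if j = m - 1 then -1 else 0) m"
  shows "(C * C\<^sup>T + 1\<^sub>m m) $$ (i,l) = 3 * dl i l - dl ((i+1) mod m) l - dl ((i+m-1) mod m) l"
proof -
  have Cc: "C \<in> carrier_mat m m" by (simp add: C_def circ_def)
  have pi: "(i+m-1) mod m < m" and pl: "(l+m-1) mod m < m" using m by auto
  have "(C * C\<^sup>T) $$ (i,l) = (\<Sum>k<m. C $$ (i,k) * C $$ (l,k))"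
    by (rule mult_transpose_entry[OF Cc Cc i l])
  also have "\<dots> = (\<Sum>k<m. (dl i k - dl ((i+m-1) mod m) k) * (dl l k - dl ((l+m-1) mod m) k))"
  proof (rule sum.cong[OF refl])
    fix k assume "k \<in> {..<m}"
    then have k: "k < m" by simp
    show "C $$ (i,k) * C $$ (l,k) = (dl i k - dl ((i+m-1) mod m) k) * (dl l k - dl ((l+m-1) mod m) k)"
      unfolding C_def C_entry[OF m i k] C_entry[OF m l k] ..
  qed
  also have "\<dots> = dl i l - dl i ((l+m-1) mod m) - dl ((i+m-1) mod m) l + dl ((i+m-1) mod m) ((l+m-1) mod m)"
    by (rule sum4[OF i pi l pl])
  finally have "(C * C\<^sup>T) $$ (i,l) = \<dots>" .
  moreover have "(C * C\<^sup>T + 1\<^sub>m m) $$ (i,l) = (C * C\<^sup>T) $$ (i,l) + dl i l"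
    using Cc i l by (simp add: dl_def)
  moreover have e1: "dl i ((l+m-1) mod m) = dl ((i+1) mod m) l"
    using pred_succ[OF i l] by (auto simp: dl_def)
  moreover have e2: "dl ((i+m-1) mod m) ((l+m-1) mod m) = dl i l"
    using pred_inj[OF l i] by (auto simp: dl_def)
  ultimately show ?thesis by simp
qed

lemma idx1: assumes "(i::nat) < m" "j < m" shows "(j+m-(i+1) mod m) mod m = ((j+m-i) mod m + m - 1) mod m"
proof -
  have a: "(i+1) mod m = (if i+1 < m then i+1 else 0)" using assms by (cases "i+1 = m") auto
  have b: "(j+m-i) mod m = (if i \<le> j then j - i else j+m-i)" using assms by (simp add: mod_lt2)
  show ?thesis unfolding a b using assms by (simp add: mod_lt2; arith)
qed
lemma idx2: assumes "(i::nat) < m" "j < m" shows "(j+m-(i+m-1) mod m) mod m = ((j+m-i) mod m + 1) mod m"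
proof -
  have a: "(i+m-1) mod m = (if i = 0 then m - 1 else i - 1)" using assms by (simp add: mod_lt2)
  have b: "(j+m-i) mod m = (if i \<le> j then j - i else j+m-i)" using assms by (simp add: mod_lt2)
  show ?thesis unfolding a b using assms by (simp add: mod_lt2; arith)
qed

lemma MB_entry:
  assumes m: "m \<ge> 3" and i: "i < m" and j: "j < m"
  defines "C \<equiv> circ (\<lambda>j. if j = 0 then 1 else if j = m - 1 then -1 else 0) m"
  shows "((C * C\<^sup>T + 1\<^sub>m m) * circ b m) $$ (i,j) =
     3 * b ((j+m-i) mod m) - b (((j+m-i) mod m + m - 1) mod m) - b (((j+m-i) mod m + 1) mod m)"
proof -
  let ?g = "\<lambda>l. circ b m $$ (l,j)"
  have Mc: "C * C\<^sup>T + 1\<^sub>m m \<in> carrier_mat m m" by (simp add: C_def circ_def)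
  have Bc: "circ b m \<in> carrier_mat m m" by (simp add: circ_def)
  have si: "(i+1) mod m < m" and pi: "(i+m-1) mod m < m" using m by auto
  have "((C * C\<^sup>T + 1\<^sub>m m) * circ b m) $$ (i,j) = (\<Sum>l<m. (C * C\<^sup>T + 1\<^sub>m m) $$ (i,l) * ?g l)"
    by (rule mult_entry[OF Mc Bc i j])
  also have "\<dots> = (\<Sum>l<m. 3 * (dl i l * ?g l) - dl ((i+1) mod m) l * ?g l - dl ((i+m-1) mod m) l * ?g l)"
  proof (rule sum.cong[OF refl])
    fix l assume "l \<in> {..<m}"
    then have l: "l < m" by simp
    show "(C * C\<^sup>T + 1\<^sub>m m) $$ (i,l) * ?g l = 3 * (dl i l * ?g l) - dl ((i+1) mod m) l * ?g l - dl ((i+m-1) mod m) l * ?g l"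
      unfolding C_def M_entry[OF m i l] by (simp only: left_diff_distrib mult.assoc)
  qed
  also have "\<dots> = 3 * (\<Sum>l<m. dl i l * ?g l) - (\<Sum>l<m. dl ((i+1) mod m) l * ?g l) - (\<Sum>l<m. dl ((i+m-1) mod m) l * ?g l)"
    by (simp only: sum_subtractf sum_distrib_left)
  also have "\<dots> = 3 * ?g i - ?g ((i+1) mod m) - ?g ((i+m-1) mod m)"
    by (simp only: sum_dl[OF i] sum_dl[OF si] sum_dl[OF pi])
  also have "\<dots> = 3 * b ((j+m-i) mod m) - b (((j+m-i) mod m + m - 1) mod m) - b (((j+m-i) mod m + 1) mod m)"
  proof -
    have g: "\<And>l. l < m \<Longrightarrow> ?g l = b ((j+m-l) mod m)" using j by (simp add: circ_def)
    show ?thesis by (simp only: g[OF i] g[OF si] g[OF pi] idx1[OF i j] idx2[OF i j])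
  qed
  finally show ?thesis .
qed

lemma bF:
  assumes k: "k \<le> m" and A: "A^m \<noteq> 1"
  shows "2^(m-k) * ((2*A)^k / (2^m - (2*A)^m)) = F A m k"
proof -
  have e: "(2::real)^(m-k) * 2^k = 2^m" using k by (simp add: power_add[symmetric])
  have "2^(m-k) * ((2*A)^k / (2^m - (2*A)^m)) = (2^(m-k) * 2^k) * A^k / (2^m * (1 - A^m))"
    by (simp add: power_mult_distrib algebra_simps)
  also have "\<dots> = A^k / (1 - A^m)" unfolding e by simp
  finally show ?thesis by (simp add: F_def)
qed

lemma ring_aux: "3*(1 + c*(a1 - b1)) - (1 + c*(a2 - b2)) - (1 + c*(a3 - b3))
   = 1 + c*((3*a1 - a2 - a3) - (3*b1 - b2 - b3))" for c a1 a2 a3 b1 b2 b3 :: real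
  by (simp add: algebra_simps)

lemma brec:
  fixes A B :: real
  assumes m: "m \<ge> 3" and k: "k < m"
  defines "A \<equiv> (3 + sqrt 5) / 2" and "B \<equiv> (3 - sqrt 5) / 2"
  assumes bb: "\<And>j. j < m \<Longrightarrow> b j = 1 + c * (F A m j - F B m j)"
  and c: "c = real (m+1) / sqrt 5"
  shows "3 * b k - b ((k+m-1) mod m) - b ((k+1) mod m) = (if k = 0 then 1 - real (m+1) else 1)"
proof -
  have s5: "sqrt 5 * sqrt 5 = (5::real)" by simp
  have s2: "sqrt 5 > (2::real)" by (rule real_less_rsqrt) simp
  have s3: "sqrt 5 < (3::real)" by (rule real_less_lsqrt) auto
  have Ax: "A*A = 3*A - 1" unfolding A_def using s5 by (simp add: field_simps)
  have Bx: "B*B = 3*B - 1" unfolding B_def using s5 by (simp add: field_simps)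
  have m0: "0 < m" using m by simp
  have "1 < A^m" using s2 m0 unfolding A_def by (intro one_less_power) auto
  then have Am: "A^m \<noteq> 1" by simp
  have "B^m < 1" using s2 s3 m0 unfolding B_def by (intro power_less_one_iff[THEN iffD2]) auto
  then have Bm: "B^m \<noteq> 1" by simp
  have p: "(k+m-1) mod m < m" and q: "(k+1) mod m < m" using m0 by auto
  have "3 * b k - b ((k+m-1) mod m) - b ((k+1) mod m)
    = 1 + c*((3*F A m k - F A m ((k+m-1) mod m) - F A m ((k+1) mod m))
            - (3*F B m k - F B m ((k+m-1) mod m) - F B m ((k+1) mod m)))"
    unfolding bb[OF k] bb[OF p] bb[OF q] by (rule ring_aux)
  also have "\<dots> = 1 + c * ((if k = 0 then 3 - A else if k = m - 1 then -1 else 0)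
                          - (if k = 0 then 3 - B else if k = m - 1 then -1 else 0))"
    unfolding recF[OF Ax Am m k] recF[OF Bx Bm m k] ..
  also have "\<dots> = (if k = 0 then 1 - real (m+1) else 1)"
    using s2 by (simp add: c A_def B_def field_simps)
  finally show ?thesis .
qed

theorem mainTheorem8:
  fixes n :: nat
  assumes "n \<ge> 4"
  defines "C \<equiv> circ (\<lambda>j. if j = 0 then 1 else if j = n - 2 then -1 else 0) (n - 1)"
  defines "X \<equiv> mat_inv (C * C\<^sup>T + 1\<^sub>m (n - 1)) * (J_mat (n - 1) - of_nat n \<cdot>\<^sub>m 1\<^sub>m (n - 1))"
  defines "b \<equiv> (\<lambda>j::nat. 1 + real n * 2 ^ (n - 1 - j) / sqrt 5 *
      ((3 + sqrt 5) ^ j / (2 ^ (n - 1) - (3 + sqrt 5) ^ (n - 1))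
     - (3 - sqrt 5) ^ j / (2 ^ (n - 1) - (3 - sqrt 5) ^ (n - 1))))"
  shows "X = circ b (n - 1)"
proof -
  define m where "m = n - 1"
  have m3: "m \<ge> 3" using assms(1) by (simp add: m_def)
  have nm: "n = m + 1" using assms(1) by (simp add: m_def)
  have n2: "n - 2 = m - 1" by (simp add: m_def)
  define A :: real where "A = (3 + sqrt 5) / 2"
  define B :: real where "B = (3 - sqrt 5) / 2"
  have s5: "sqrt 5 * sqrt 5 = (5::real)" by simp
  have s2: "sqrt 5 > (2::real)" by (rule real_less_rsqrt) simp
  have s3: "sqrt 5 < (3::real)" by (rule real_less_lsqrt) auto
  have m0: "0 < m" using m3 by simp
  have "1 < A^m" using s2 m0 unfolding A_def by (intro one_less_power) auto
  then have Am: "A^m \<noteq> 1" by simp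
  have "B^m < 1" using s2 s3 m0 unfolding B_def by (intro power_less_one_iff[THEN iffD2]) auto
  then have Bm: "B^m \<noteq> 1" by simp
  have A2: "3 + sqrt 5 = 2 * A" and B2: "3 - sqrt 5 = 2 * B" by (simp_all add: A_def B_def)
  have bb: "b j = 1 + real (m+1) / sqrt 5 * (F A m j - F B m j)" if j: "j < m" for j
  proof -
    have "b j = 1 + real n / sqrt 5 * (2^(m-j) * ((2*A)^j / (2^m - (2*A)^m)) - 2^(m-j) * ((2*B)^j / (2^m - (2*B)^m)))"
      unfolding b_def A2 B2 m_def[symmetric] by (simp add: right_diff_distrib)
    also have "\<dots> = 1 + real (m+1) / sqrt 5 * (F A m j - F B m j)"
      unfolding bF[OF less_imp_le[OF j] Am] bF[OF less_imp_le[OF j] Bm] nm by simp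
    finally show ?thesis .
  qed
  have brec': "3 * b k - b ((k+m-1) mod m) - b ((k+1) mod m) = (if k = 0 then 1 - real (m+1) else 1)"
    if "k < m" for k
    by (rule brec[OF m3 that bb[unfolded A_def B_def]]) simp_all
  let ?C = "circ (\<lambda>j. if j = 0 then 1 else if j = m - 1 then -1 else 0) m"
  have Ceq: "C = ?C" unfolding C_def n2 m_def ..
  define M where "M = ?C * ?C\<^sup>T + 1\<^sub>m m"
  define T where "T = J_mat m - real n \<cdot>\<^sub>m 1\<^sub>m m"
  have Mc: "M \<in> carrier_mat m m" by (simp add: M_def circ_def)
  have Tc: "T \<in> carrier_mat m m" unfolding T_def by (rule minus_carrier_mat) simp
  have Bc: "circ b m \<in> carrier_mat m m" by (simp add: circ_def)
  have MB: "M * circ b m = T"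
  proof (rule eq_matI)
    fix i j assume i: "i < dim_row T" and j: "j < dim_col T"
    then have i: "i < m" and j: "j < m" using Tc by auto
    have k0: "((j+m-i) mod m = 0) = (i = j)" using i j by (simp add: mod_lt2; arith)
    have km: "(j+m-i) mod m < m" using m0 by simp
    show "(M * circ b m) $$ (i,j) = T $$ (i,j)"
      unfolding M_def MB_entry[OF m3 i j] brec'[OF km] k0
      using i j by (simp add: T_def J_mat_def nm)
  qed (use Mc Tc Bc in auto)
  define K where "K = mat m m (\<lambda>(i,j). -(1/real n) * (dl i j + 1))"
  have Kc: "K \<in> carrier_mat m m" by (simp add: K_def)
  have TK: "T * K = 1\<^sub>m m"
  proof (rule eq_matI)
    fix i j assume i: "i < dim_row (1\<^sub>m m :: real mat)" and j: "j < dim_col (1\<^sub>m m :: real mat)"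
    then have i: "i < m" and j: "j < m" by auto
    have nz: "real n \<noteq> 0" using nm by simp
    have "(T * K) $$ (i,j) = (\<Sum>k<m. T $$ (i,k) * K $$ (k,j))"
      by (rule mult_entry[OF Tc Kc i j])
    also have "\<dots> = (\<Sum>k<m. (dl i k * dl j k + dl i k) - (1/real n * dl j k + 1/real n))"
    proof (rule sum.cong[OF refl])
      fix k assume "k \<in> {..<m}"
      then have k: "k < m" by simp
      show "T $$ (i,k) * K $$ (k,j) = (dl i k * dl j k + dl i k) - (1/real n * dl j k + 1/real n)"
        using i j k nz by (simp add: T_def K_def J_mat_def dl_def field_simps)
    qed
    also have "\<dots> = dl j i + 1 - (1/real n + real m / real n)"
      by (simp only: sum_subtractf sum.distrib sum_dl[OF i] sum_dl1[OF i] sum_distrib_left[symmetric] sum_dl1[OF j])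
        simp
    also have "\<dots> = 1\<^sub>m m $$ (i,j)"
      using i j nz by (simp add: nm dl_def field_simps)
    finally show "(T * K) $$ (i,j) = 1\<^sub>m m $$ (i,j)" .
  qed (use Tc Kc in auto)
  define Mi where "Mi = circ b m * K"
  have Mic: "Mi \<in> carrier_mat m m" using Bc Kc by (simp add: Mi_def)
  have MMi: "M * Mi = 1\<^sub>m m"
    unfolding Mi_def using Mc Bc Kc by (simp add: assoc_mult_mat[symmetric] MB TK)
  have MiM: "Mi * M = 1\<^sub>m m" by (rule mat_mult_left_right_inverse[OF Mc Mic MMi])
  have dM: "dim_row M = m" using Mc by simp
  have inv: "mat_inv M = Mi"
    unfolding mat_inv_def dM
  proof (rule the_equality)
    show "Mi \<in> carrier_mat m m \<and> M * Mi = 1\<^sub>m m \<and> Mi * M = 1\<^sub>m m" using Mic MMi MiM by simp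
  next
    fix B' assume h: "B' \<in> carrier_mat m m \<and> M * B' = 1\<^sub>m m \<and> B' * M = 1\<^sub>m m"
    then have B'c: "B' \<in> carrier_mat m m" and hB: "B' * M = 1\<^sub>m m" by auto
    have "B' = B' * (M * Mi)" using B'c by (simp add: MMi)
    also have "\<dots> = (B' * M) * Mi" using B'c Mc Mic by (simp add: assoc_mult_mat)
    also have "\<dots> = Mi" using Mic by (simp add: hB)
    finally show "B' = Mi" .
  qed
  have "X = mat_inv M * T" unfolding X_def Ceq M_def T_def m_def by simp
  also have "\<dots> = Mi * (M * circ b m)" by (simp add: inv MB)
  also have "\<dots> = (Mi * M) * circ b m" using Mic Mc Bc by (simp add: assoc_mult_mat)
  also have "\<dots> = circ b m" using Bc by (simp add: MiM)
  finally show ?thesis by (simp add: m_def)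
qed
end
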